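(* Let $\alpha,\beta:\mathcal{X}\to\mathcal{Y}$ be two linear maps between vector spaces $\mathcal{X},\mathcal{Y}$ over $\mathbb{R}$. (1) If $\beta(\ker\alpha)\cap\mathrm{im}\,\alpha=\{0\}\subset\mathcal{Y}$, then a generic linear combination $\gamma$ of $\alpha$ and $\beta$ satisfies $\ker\gamma=\ker\alpha\cap\ker\beta$. (2) If $\beta^{\diamondsuit}(\ker\alpha^{\diamondsuit})\cap\mathrm{im}\,\alpha^{\diamondsuit}=\{0\}\subset\mathcal{X}^{\diamondsuit}$, or equivalently $\beta^{-1}(\mathrm{im}\,\alpha)+\ker\alpha=\mathcal{X}$, then a generic linear combination $\gamma$ of $\alpha$ and $\beta$ satisfies $\mathrm{im}\,\gamma=\mathrm{im}\,\alpha+\mathrm{im}\,\beta$.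
   Context: $(\cdot)^{\diamondsuit}$ denotes the dual vector space and dual (transpose) linear map. A generic linear combination of $\alpha$ and $\beta$ means $a\alpha+b\beta$ for $(a,b)$ in an open dense subset of $\mathbb{R}^2$. *)

theory Defs
  imports "HOL-Analysis.Analysis"
begin

text \<open>A property P of pairs (a,b) holds for a generic linear combination a*alpha + b*beta
  if it holds for all (a,b) in some open dense subset of R^2.\<close>
definition generic_comb :: "(real \<Rightarrow> real \<Rightarrow> bool) \<Rightarrow> bool" where
  "generic_comb P \<longleftrightarrow> (\<exists>U :: (real \<times> real) set. open U \<and> closure U = UNIV \<and>
      (\<forall>p\<in>U. P (fst p) (snd p)))"

definition ker :: "('a \<Rightarrow> 'b::zero) \<Rightarrow> 'a set" where
  "ker f = {x. f x = 0}"

definition dual_space :: "('a::real_vector \<Rightarrow> real) set" where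
  "dual_space = {\<phi>. linear \<phi>}"

definition dual_map :: "('a::real_vector \<Rightarrow> 'b::real_vector) \<Rightarrow> ('b \<Rightarrow> real) \<Rightarrow> ('a \<Rightarrow> real)" where
  "dual_map f \<phi> = \<phi> \<circ> f"

definition dual_ker :: "('a::real_vector \<Rightarrow> 'b::real_vector) \<Rightarrow> ('b \<Rightarrow> real) set" where
  "dual_ker f = {\<phi> \<in> dual_space. dual_map f \<phi> = (\<lambda>_. 0)}"

definition dual_im :: "('a::real_vector \<Rightarrow> 'b::real_vector) \<Rightarrow> ('a \<Rightarrow> real) set" where
  "dual_im f = dual_map f ` dual_space"

end

theory Submission
  imports Defs
begin


lemma indep_step:
  fixes \<alpha> :: "'a::euclidean_space \<Rightarrow> 'b::euclidean_space" and \<beta>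
  assumes la: "linear \<alpha>" and lb: "linear \<beta>"
    and cond: "\<beta> ` ker \<alpha> \<inter> range \<alpha> = {0}"
    and fin: "finite T"
    and ev: "\<And>t. t \<in> T \<Longrightarrow> t *\<^sub>R \<alpha> (x t) + \<beta> (x t) = 0"
    and nN: "\<And>t. t \<in> T \<Longrightarrow> x t \<notin> ker \<alpha> \<inter> ker \<beta>"
  shows "(\<Sum>t\<in>T. c t *\<^sub>R x t) \<in> ker \<alpha> \<inter> ker \<beta> \<Longrightarrow> t \<in> T \<Longrightarrow> c t = 0"
  using fin ev nN
proof (induction T arbitrary: c t rule: finite_induct)
  case empty
  then show ?case by simp
next
  case (insert t1 T)
  interpret a: linear \<alpha> by fact
  interpret b: linear \<beta> by fact
  let ?s = "\<Sum>t\<in>insert t1 T. c t *\<^sub>R x t"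
  have sa: "\<alpha> ?s = 0" and sb: "\<beta> ?s = 0" using insert.prems(1) by (auto simp: ker_def)
  have bx: "\<beta> (x t) = - (t *\<^sub>R \<alpha> (x t))" if "t \<in> insert t1 T" for t
    using insert.prems(3)[OF that] by (simp add: eq_neg_iff_add_eq_0 add.commute)
  define z where "z = (\<Sum>t\<in>T. (c t * (t - t1)) *\<^sub>R x t)"
  have A1: "(\<Sum>t\<in>T. c t *\<^sub>R \<alpha> (x t)) = - (c t1 *\<^sub>R \<alpha> (x t1))"
    using sa insert.hyps by (simp add: a.sum a.scale a.add eq_neg_iff_add_eq_0 add.commute)
  have "\<beta> ?s = (\<Sum>t\<in>insert t1 T. c t *\<^sub>R \<beta> (x t))" by (simp add: b.sum b.scale)
  also have "\<dots> = (\<Sum>t\<in>insert t1 T. - ((c t * t) *\<^sub>R \<alpha> (x t)))"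
    by (rule sum.cong) (auto simp: bx)
  finally have "(\<Sum>t\<in>insert t1 T. ((c t * t) *\<^sub>R \<alpha> (x t))) = 0"
    using sb by (simp add: sum_negf)
  then have A2: "(\<Sum>t\<in>T. (c t * t) *\<^sub>R \<alpha> (x t)) = - ((c t1 * t1) *\<^sub>R \<alpha> (x t1))"
    using insert.hyps by (simp add: eq_neg_iff_add_eq_0 add.commute)
  have "\<alpha> z = (\<Sum>t\<in>T. (c t * t) *\<^sub>R \<alpha> (x t)) - t1 *\<^sub>R (\<Sum>t\<in>T. c t *\<^sub>R \<alpha> (x t))"
    by (simp add: z_def a.sum a.scale a.diff algebra_simps scaleR_sum_right sum_subtractf[symmetric])
  then have za: "\<alpha> z = 0" by (simp add: A1 A2)
  have "\<beta> z = (\<Sum>t\<in>T. (c t * (t - t1)) *\<^sub>R \<beta> (x t))" by (simp add: z_def b.sum b.scale)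
  also have "\<dots> = (\<Sum>t\<in>T. - ((c t * (t - t1) * t) *\<^sub>R \<alpha> (x t)))"
    by (rule sum.cong) (auto simp: bx)
  also have "\<dots> = \<alpha> (- (\<Sum>t\<in>T. (c t * (t - t1) * t) *\<^sub>R x t))"
    by (simp add: a.sum a.scale a.neg sum_negf)
  finally have "\<beta> z \<in> range \<alpha>" by blast
  moreover have "\<beta> z \<in> \<beta> ` ker \<alpha>" using za by (auto simp: ker_def)
  ultimately have zb: "\<beta> z = 0" using cond by blast
  have zN: "z \<in> ker \<alpha> \<inter> ker \<beta>" using za zb by (simp add: ker_def)
  have IH: "c s * (s - t1) = 0" if "s \<in> T" for s
    using insert.IH[of "\<lambda>t. c t * (t - t1)" s] zN that insert.prems by (auto simp: z_def)
  have cT: "c s = 0" if "s \<in> T" for s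
    using IH[OF that] that insert.hyps by auto
  have "?s = c t1 *\<^sub>R x t1 + (\<Sum>t\<in>T. c t *\<^sub>R x t)" using insert.hyps by simp
  also have "(\<Sum>t\<in>T. c t *\<^sub>R x t) = 0" by (simp add: cT)
  finally have "c t1 *\<^sub>R x t1 \<in> ker \<alpha> \<inter> ker \<beta>" using insert.prems(1) by simp
  then have "c t1 = 0"
    using insert.prems(4)[of t1] by (auto simp: ker_def a.scale b.scale)
  then show ?case using cT insert.prems(2) by auto
qed

lemma bad_finite:
  fixes \<alpha> :: "'a::euclidean_space \<Rightarrow> 'b::euclidean_space" and \<beta>
  assumes la: "linear \<alpha>" and lb: "linear \<beta>"
    and cond: "\<beta> ` ker \<alpha> \<inter> range \<alpha> = {0}"
  shows "finite {t. \<exists>x. t *\<^sub>R \<alpha> x + \<beta> x = 0 \<and> x \<notin> ker \<alpha> \<inter> ker \<beta>}" (is "finite ?B")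
proof (rule ccontr)
  interpret a: linear \<alpha> by fact
  interpret b: linear \<beta> by fact
  assume "infinite ?B"
  then obtain T where T: "finite T" "card T = Suc DIM('a)" "T \<subseteq> ?B"
    using infinite_arbitrarily_large by blast
  define x where "x t = (SOME x. t *\<^sub>R \<alpha> x + \<beta> x = 0 \<and> x \<notin> ker \<alpha> \<inter> ker \<beta>)" for t
  have xp: "t *\<^sub>R \<alpha> (x t) + \<beta> (x t) = 0 \<and> x t \<notin> ker \<alpha> \<inter> ker \<beta>" if "t \<in> T" for t
  proof -
    have "\<exists>x. t *\<^sub>R \<alpha> x + \<beta> x = 0 \<and> x \<notin> ker \<alpha> \<inter> ker \<beta>" using T(3) that by blast
    then show ?thesis unfolding x_def by (rule someI_ex)
  qed
  have inj: "inj_on x T"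
  proof (rule inj_onI)
    fix s t assume st: "s \<in> T" "t \<in> T" "x s = x t"
    show "s = t"
    proof (rule ccontr)
      assume "s \<noteq> t"
      have "s *\<^sub>R \<alpha> (x t) + \<beta> (x t) = 0" "t *\<^sub>R \<alpha> (x t) + \<beta> (x t) = 0"
        using xp st by metis+
      then have "(s - t) *\<^sub>R \<alpha> (x t) = 0"
        by (metis add_diff_cancel_left' scaleR_left_diff_distrib add.commute diff_self)
      then have "\<alpha> (x t) = 0" using \<open>s \<noteq> t\<close> by simp
      moreover have "\<beta> (x t) = 0" using xp[OF st(2)] calculation by simp
      ultimately show False using xp[OF st(2)] by (simp add: ker_def)
    qed
  qed
  have "independent (x ` T)"
  proof (rule independent_if_scalars_zero)
    show "finite (x ` T)" using T by simp
    fix f v assume s: "(\<Sum>v\<in>x ` T. f v *\<^sub>R v) = 0" and v: "v \<in> x ` T"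
    then obtain t where t: "t \<in> T" "v = x t" by auto
    have "(\<Sum>t\<in>T. f (x t) *\<^sub>R x t) = 0" using s by (simp add: sum.reindex[OF inj])
    then have "(\<Sum>t\<in>T. f (x t) *\<^sub>R x t) \<in> ker \<alpha> \<inter> ker \<beta>" by (simp add: ker_def)
    from indep_step[OF la lb cond T(1), of x "\<lambda>t. f (x t)", OF _ _ this t(1)] xp
    show "f v = 0" using t by blast
  qed
  from independent_bound[OF this] have "card (x ` T) \<le> DIM('a)" by simp
  with card_image[OF inj] T(2) show False by simp
qed

lemma dense_avoid:
  fixes F :: "real set"
  assumes "finite F"
  shows "closure ({p::real\<times>real. snd p \<noteq> 0} \<inter> (\<lambda>p. fst p / snd p) -` (- F)) = UNIV"
proof -
  let ?U = "{p::real\<times>real. snd p \<noteq> 0} \<inter> (\<lambda>p. fst p / snd p) -` (- F)"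
  have "z \<in> closure ?U" for z :: "real \<times> real"
  proof (subst closure_approachable, intro allI impI)
    fix e :: real assume e: "e > 0"
    obtain p q where z: "z = (p, q)" by fastforce
    define b where "b = (if q = 0 then e/4 else q)"
    have b: "b \<noteq> 0" "\<bar>b - q\<bar> < e/2" using e by (auto simp: b_def)
    have "infinite {p..p + e/4}" using e by (simp add: infinite_Icc)
    then have "\<not> {p..p + e/4} \<subseteq> (\<lambda>t. t * b) ` F" using assms finite_subset by blast
    then obtain a where a: "a \<in> {p..p + e/4}" "a \<notin> (\<lambda>t. t * b) ` F" by blast
    have "a / b \<notin> F"
    proof
      assume "a / b \<in> F"
      then have "(a/b) * b \<in> (\<lambda>t. t * b) ` F" by blast
      with a b show False by simp
    qed
    then have "(a, b) \<in> ?U" using b by simp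
    moreover have "dist (a, b) z < e"
    proof -
      have "dist (a, b) z = sqrt ((dist a p)^2 + (dist b q)^2)" by (simp add: z dist_Pair_Pair)
      also have "\<dots> \<le> dist a p + dist b q"
        by (rule sqrt_sum_squares_le_sum) auto
      also have "\<dots> < e" using a b e by (simp add: dist_real_def)
      finally show ?thesis .
    qed
    ultimately show "\<exists>y\<in>?U. dist y z < e" by blast
  qed
  then show ?thesis by blast
qed

lemma part1:
  fixes \<alpha> :: "'a::euclidean_space \<Rightarrow> 'b::euclidean_space" and \<beta>
  assumes la: "linear \<alpha>" and lb: "linear \<beta>"
    and cond: "\<beta> ` ker \<alpha> \<inter> range \<alpha> = {0}"
  shows "generic_comb (\<lambda>a b. ker (\<lambda>x. a *\<^sub>R \<alpha> x + b *\<^sub>R \<beta> x) = ker \<alpha> \<inter> ker \<beta>)"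
proof -
  interpret a: linear \<alpha> by fact
  interpret b: linear \<beta> by fact
  define F where "F = {t. \<exists>x. t *\<^sub>R \<alpha> x + \<beta> x = 0 \<and> x \<notin> ker \<alpha> \<inter> ker \<beta>}"
  have fin: "finite F" unfolding F_def by (rule bad_finite[OF la lb cond])
  define U where "U = {p::real\<times>real. snd p \<noteq> 0} \<inter> (\<lambda>p. fst p / snd p) -` (- F)"
  have "open U" unfolding U_def
  proof (rule continuous_open_preimage)
    show "continuous_on {p::real\<times>real. snd p \<noteq> 0} (\<lambda>p. fst p / snd p)"
      by (intro continuous_intros) auto
    show "open {p::real\<times>real. snd p \<noteq> 0}"
      by (intro open_Collect_neq continuous_intros)
    show "open (- F)" using fin by (simp add: finite_imp_closed open_Compl)
  qed
  moreover have "closure U = UNIV" unfolding U_def by (rule dense_avoid[OF fin])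
  moreover have "ker (\<lambda>x. a *\<^sub>R \<alpha> x + b *\<^sub>R \<beta> x) = ker \<alpha> \<inter> ker \<beta>" if "(a, b) \<in> U" for a b
  proof
    show "ker \<alpha> \<inter> ker \<beta> \<subseteq> ker (\<lambda>x. a *\<^sub>R \<alpha> x + b *\<^sub>R \<beta> x)" by (auto simp: ker_def)
    show "ker (\<lambda>x. a *\<^sub>R \<alpha> x + b *\<^sub>R \<beta> x) \<subseteq> ker \<alpha> \<inter> ker \<beta>"
    proof
      fix x assume "x \<in> ker (\<lambda>x. a *\<^sub>R \<alpha> x + b *\<^sub>R \<beta> x)"
      then have "a *\<^sub>R \<alpha> x + b *\<^sub>R \<beta> x = 0" by (simp add: ker_def)
      then have "(1/b) *\<^sub>R (a *\<^sub>R \<alpha> x + b *\<^sub>R \<beta> x) = 0" by simp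
      then have "(a/b) *\<^sub>R \<alpha> x + \<beta> x = 0" using that by (simp add: U_def scaleR_add_right)
      moreover have "a / b \<notin> F" using that by (simp add: U_def)
      ultimately show "x \<in> ker \<alpha> \<inter> ker \<beta>" unfolding F_def by blast
    qed
  qed
  ultimately show ?thesis unfolding generic_comb_def by (intro exI[of _ U]) auto
qed



lemma sum_to_dual:
  fixes \<alpha> :: "'a::euclidean_space \<Rightarrow> 'b::euclidean_space" and \<beta>
  assumes la: "linear \<alpha>" and lb: "linear \<beta>"
    and S: "{u + v | u v. u \<in> \<beta> -` range \<alpha> \<and> v \<in> ker \<alpha>} = UNIV"
  shows "dual_map \<beta> ` dual_ker \<alpha> \<inter> dual_im \<alpha> = {\<lambda>_. 0}"
proof
  interpret a: linear \<alpha> by fact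
  interpret b: linear \<beta> by fact
  have l0: "(\<lambda>_::'b. 0::real) \<in> dual_space" by (simp add: dual_space_def linear_zero)
  show "{\<lambda>_. 0} \<subseteq> dual_map \<beta> ` dual_ker \<alpha> \<inter> dual_im \<alpha>"
  proof -
    have "(\<lambda>_. 0) = dual_map \<beta> (\<lambda>_. 0)" by (simp add: dual_map_def o_def)
    moreover have "(\<lambda>_. 0) \<in> dual_ker \<alpha>" using l0 by (simp add: dual_ker_def dual_map_def o_def)
    moreover have "(\<lambda>_. 0) = dual_map \<alpha> (\<lambda>_. 0)" by (simp add: dual_map_def o_def)
    ultimately show ?thesis using l0 unfolding dual_im_def by blast
  qed
  show "dual_map \<beta> ` dual_ker \<alpha> \<inter> dual_im \<alpha> \<subseteq> {\<lambda>_. 0}"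
  proof
    fix f assume "f \<in> dual_map \<beta> ` dual_ker \<alpha> \<inter> dual_im \<alpha>"
    then obtain \<phi> \<psi> where \<phi>: "linear \<phi>" "\<phi> \<circ> \<alpha> = (\<lambda>_. 0)" "f = \<phi> \<circ> \<beta>"
      and \<psi>: "linear \<psi>" "f = \<psi> \<circ> \<alpha>"
      by (auto simp: dual_im_def dual_ker_def dual_space_def dual_map_def)
    have "f x = 0" for x
    proof -
      have "x \<in> {u + v | u v. u \<in> \<beta> -` range \<alpha> \<and> v \<in> ker \<alpha>}" using S by simp
      then obtain u v where x: "x = u + v" "\<beta> u \<in> range \<alpha>" "\<alpha> v = 0"
        by (auto simp: ker_def)
      obtain w where w: "\<beta> u = \<alpha> w" using x by auto
      have "f x = \<phi> (\<beta> u) + f v" using \<phi> by (simp add: x b.add linear_add)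
      also have "\<phi> (\<beta> u) = 0" using w \<phi>(2) by (metis comp_apply)
      also have "f v = 0" using \<psi> x by (simp add: linear_0)
      finally show ?thesis by simp
    qed
    then show "f \<in> {\<lambda>_. 0}" by auto
  qed
qed

lemma dual_to_sum:
  fixes \<alpha> :: "'a::euclidean_space \<Rightarrow> 'b::euclidean_space" and \<beta>
  assumes la: "linear \<alpha>" and lb: "linear \<beta>"
    and D: "dual_map \<beta> ` dual_ker \<alpha> \<inter> dual_im \<alpha> = {\<lambda>_. 0}"
  shows "{u + v | u v. u \<in> \<beta> -` range \<alpha> \<and> v \<in> ker \<alpha>} = UNIV" (is "?S = _")
proof (rule ccontr)
  interpret a: linear \<alpha> by fact
  interpret b: linear \<beta> by fact
  assume ne: "?S \<noteq> UNIV"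
  have sub1: "subspace (\<beta> -` range \<alpha>)"
    unfolding subspace_def
  proof (intro conjI ballI allI)
    show "0 \<in> \<beta> -` range \<alpha>" by (simp add: b.zero) (metis a.zero rangeI)
    fix x y assume "x \<in> \<beta> -` range \<alpha>" "y \<in> \<beta> -` range \<alpha>"
    then obtain x' y' where "\<beta> x = \<alpha> x'" "\<beta> y = \<alpha> y'" by auto
    then show "x + y \<in> \<beta> -` range \<alpha>" by (simp add: b.add) (metis a.add rangeI)
  next
    fix c x assume "x \<in> \<beta> -` range \<alpha>"
    then obtain x' where "\<beta> x = \<alpha> x'" by auto
    then show "c *\<^sub>R x \<in> \<beta> -` range \<alpha>" by (simp add: b.scale) (metis a.scale rangeI)
  qed
  have sub2: "subspace (ker \<alpha>)"
    unfolding subspace_def ker_def by (simp add: a.zero a.add a.scale)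
  have subS: "subspace ?S" by (rule subspace_sums[OF sub1 sub2])
  have "?S\<^sup>\<bottom> \<noteq> {0}"
    using orthogonal_comp_self[OF subS] ne by (metis orthogonal_comp_null)
  moreover have "0 \<in> ?S\<^sup>\<bottom>" using subspace_orthogonal_comp subspace_0 by blast
  ultimately obtain w where w: "w \<in> ?S\<^sup>\<bottom>" "w \<noteq> 0" by blast
  have PS: "\<beta> -` range \<alpha> \<subseteq> ?S"
  proof
    fix x assume "x \<in> \<beta> -` range \<alpha>"
    moreover have "(0::'a) \<in> ker \<alpha>" by (simp add: ker_def a.zero)
    ultimately have "x + 0 \<in> ?S" by blast
    then show "x \<in> ?S" by simp
  qed
  have KS: "ker \<alpha> \<subseteq> ?S"
  proof
    fix x assume "x \<in> ker \<alpha>"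
    moreover have "(0::'a) \<in> \<beta> -` range \<alpha>" by (simp add: b.zero) (metis a.zero rangeI)
    ultimately have "0 + x \<in> ?S" by blast
    then show "x \<in> ?S" by simp
  qed
  define M where "M = adjoint \<beta> ` ((range \<alpha>)\<^sup>\<bottom>)"
  have subM: "subspace M" unfolding M_def
    by (intro linear_subspace_image adjoint_linear lb subspace_orthogonal_comp)
  have "M\<^sup>\<bottom> \<subseteq> \<beta> -` range \<alpha>"
  proof
    fix x assume x: "x \<in> M\<^sup>\<bottom>"
    have "\<beta> x \<in> (range \<alpha>)\<^sup>\<bottom>\<^sup>\<bottom>"
      unfolding orthogonal_comp_def orthogonal_def
    proof (clarify)
      fix p assume p: "\<forall>y\<in>range \<alpha>. y \<bullet> p = 0"
      then have "p \<in> (range \<alpha>)\<^sup>\<bottom>" by (simp add: orthogonal_comp_def orthogonal_def)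
      then have "adjoint \<beta> p \<in> M" unfolding M_def by (rule imageI)
      then have "adjoint \<beta> p \<bullet> x = 0" using x by (simp add: orthogonal_comp_def orthogonal_def)
      then show "p \<bullet> \<beta> x = 0" by (simp add: adjoint_clauses[OF lb])
    qed
    then show "x \<in> \<beta> -` range \<alpha>"
      using orthogonal_comp_self[OF linear_subspace_image[OF la subspace_UNIV]] by simp
  qed
  then have "w \<in> M\<^sup>\<bottom>\<^sup>\<bottom>"
    using w(1) orthogonal_comp_anti_mono[OF PS] orthogonal_comp_anti_mono[OF \<open>M\<^sup>\<bottom> \<subseteq> \<beta> -` range \<alpha>\<close>] by blast
  then have "w \<in> M" using orthogonal_comp_self[OF subM] by simp
  then obtain p where p: "p \<in> (range \<alpha>)\<^sup>\<bottom>" "w = adjoint \<beta> p" by (auto simp: M_def)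
  have "w \<in> (ker \<alpha>)\<^sup>\<bottom>" using w(1) KS orthogonal_comp_anti_mono by blast
  also have "ker \<alpha> = (range (adjoint \<alpha>))\<^sup>\<bottom>"
    using ker_orthogonal_comp_adjoint[OF la] by (simp add: ker_def vimage_def)
  also have "(range (adjoint \<alpha>))\<^sup>\<bottom>\<^sup>\<bottom> = range (adjoint \<alpha>)"
    by (rule orthogonal_comp_self[OF linear_subspace_image[OF adjoint_linear[OF la] subspace_UNIV]])
  finally obtain v where v: "w = adjoint \<alpha> v" by auto
  define \<phi> where "\<phi> = (\<lambda>y. p \<bullet> y)"
  define \<psi> where "\<psi> = (\<lambda>y. v \<bullet> y)"
  have l\<phi>: "linear \<phi>" unfolding \<phi>_def by (rule bounded_linear.linear[OF bounded_linear_inner_right])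
  have l\<psi>: "linear \<psi>" unfolding \<psi>_def by (rule bounded_linear.linear[OF bounded_linear_inner_right])
  have "\<phi> \<circ> \<alpha> = (\<lambda>_. 0)" using p(1)
    by (auto simp: \<phi>_def orthogonal_comp_def orthogonal_def inner_commute)
  then have k: "\<phi> \<in> dual_ker \<alpha>" using l\<phi> by (simp add: dual_ker_def dual_space_def dual_map_def)
  have e1: "dual_map \<beta> \<phi> = (\<lambda>x. w \<bullet> x)"
    by (auto simp: dual_map_def \<phi>_def p(2) adjoint_clauses[OF lb])
  have e2: "dual_map \<alpha> \<psi> = (\<lambda>x. w \<bullet> x)"
    by (auto simp: dual_map_def \<psi>_def v adjoint_clauses[OF la])
  have "(\<lambda>x. w \<bullet> x) \<in> dual_map \<beta> ` dual_ker \<alpha> \<inter> dual_im \<alpha>"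
  proof
    show "(\<lambda>x. w \<bullet> x) \<in> dual_map \<beta> ` dual_ker \<alpha>" using k e1 by (metis image_eqI)
    show "(\<lambda>x. w \<bullet> x) \<in> dual_im \<alpha>" unfolding dual_im_def using e2 l\<psi>
      by (metis dual_space_def image_eqI mem_Collect_eq)
  qed
  with D have "(\<lambda>x. w \<bullet> x) = (\<lambda>_. 0)" by blast
  then have "w \<bullet> w = 0" by metis
  with w(2) show False by simp
qed



lemma part3:
  fixes \<alpha> :: "'a::euclidean_space \<Rightarrow> 'b::euclidean_space" and \<beta>
  assumes la: "linear \<alpha>" and lb: "linear \<beta>"
    and S: "{u + v | u v. u \<in> \<beta> -` range \<alpha> \<and> v \<in> ker \<alpha>} = UNIV"
  shows "generic_comb (\<lambda>a b. range (\<lambda>x. a *\<^sub>R \<alpha> x + b *\<^sub>R \<beta> x) =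
                                {u + v | u v. u \<in> range \<alpha> \<and> v \<in> range \<beta>})"
proof -
  interpret a: linear \<alpha> by fact
  interpret b: linear \<beta> by fact
  define \<alpha>' where "\<alpha>' = adjoint \<alpha>"
  define \<beta>' where "\<beta>' = adjoint \<beta>"
  have la': "linear \<alpha>'" and lb': "linear \<beta>'" unfolding \<alpha>'_def \<beta>'_def
    by (simp_all add: adjoint_linear la lb)
  have cond: "\<beta>' ` ker \<alpha>' \<inter> range \<alpha>' = {0}"
  proof
    show "{0} \<subseteq> \<beta>' ` ker \<alpha>' \<inter> range \<alpha>'"
      using linear_0[OF la'] linear_0[OF lb'] by (force simp: ker_def)
    show "\<beta>' ` ker \<alpha>' \<inter> range \<alpha>' \<subseteq> {0}"
    proof
      fix y assume "y \<in> \<beta>' ` ker \<alpha>' \<inter> range \<alpha>'"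
      then obtain p q where pq: "\<alpha>' p = 0" "y = \<beta>' p" "y = \<alpha>' q" by (auto simp: ker_def)
      have "y \<bullet> x = 0" for x
      proof -
        have "x \<in> {u + v | u v. u \<in> \<beta> -` range \<alpha> \<and> v \<in> ker \<alpha>}" using S by simp
        then obtain u v w where x: "x = u + v" "\<beta> u = \<alpha> w" "\<alpha> v = 0"
          by (auto simp: ker_def)
        have "y \<bullet> u = p \<bullet> \<beta> u" using pq(2) by (simp add: \<beta>'_def adjoint_clauses[OF lb])
        also have "\<dots> = \<alpha>' p \<bullet> w" by (simp add: x(2) \<alpha>'_def adjoint_clauses[OF la])
        also have "\<dots> = 0" by (simp add: pq(1))
        finally have 1: "y \<bullet> u = 0" .
        have "y \<bullet> v = q \<bullet> \<alpha> v" using pq(3) by (simp add: \<alpha>'_def adjoint_clauses[OF la])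
        also have "\<dots> = 0" by (simp add: x(3))
        finally have 2: "y \<bullet> v = 0" .
        show ?thesis using 1 2 by (simp add: x inner_add_right)
      qed
      then have "y \<bullet> y = 0" by blast
      then show "y \<in> {0}" by simp
    qed
  qed
  obtain U where U: "open U" "closure U = UNIV"
    "\<And>p. p \<in> U \<Longrightarrow> ker (\<lambda>x. fst p *\<^sub>R \<alpha>' x + snd p *\<^sub>R \<beta>' x) = ker \<alpha>' \<inter> ker \<beta>'"
    using part1[OF la' lb' cond] unfolding generic_comb_def by blast
  define R where "R = {u + v | u v. u \<in> range \<alpha> \<and> v \<in> range \<beta>}"
  have subR: "subspace R" unfolding R_def
    by (intro subspace_sums linear_subspace_image la lb subspace_UNIV)
  have RO: "R\<^sup>\<bottom> = ker \<alpha>' \<inter> ker \<beta>'"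
  proof (intro set_eqI iffI)
    fix y assume y: "y \<in> R\<^sup>\<bottom>"
    have "\<alpha> x + 0 \<in> R" "0 + \<beta> x \<in> R" for x
      unfolding R_def using a.zero b.zero by (metis (mono_tags, lifting) mem_Collect_eq rangeI)+
    then have "\<alpha> x \<bullet> y = 0" "\<beta> x \<bullet> y = 0" for x
      using y by (auto simp: orthogonal_comp_def orthogonal_def)
    then have "x \<bullet> \<alpha>' y = 0" "x \<bullet> \<beta>' y = 0" for x
      by (simp_all add: \<alpha>'_def \<beta>'_def adjoint_clauses[OF la] adjoint_clauses[OF lb])
    then have "\<alpha>' y \<bullet> \<alpha>' y = 0" "\<beta>' y \<bullet> \<beta>' y = 0" by blast+
    then show "y \<in> ker \<alpha>' \<inter> ker \<beta>'" by (simp add: ker_def)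
  next
    fix y assume y: "y \<in> ker \<alpha>' \<inter> ker \<beta>'"
    show "y \<in> R\<^sup>\<bottom>" unfolding orthogonal_comp_def orthogonal_def R_def
    proof (clarify)
      fix a b
      have "\<alpha> a \<bullet> y = a \<bullet> \<alpha>' y" "\<beta> b \<bullet> y = b \<bullet> \<beta>' y"
        by (simp_all add: \<alpha>'_def \<beta>'_def adjoint_clauses[OF la] adjoint_clauses[OF lb])
      then show "(\<alpha> a + \<beta> b) \<bullet> y = 0" using y by (simp add: ker_def inner_add_left)
    qed
  qed
  have "range (\<lambda>x. a *\<^sub>R \<alpha> x + b *\<^sub>R \<beta> x) = R" if ab: "(a, b) \<in> U" for a b
  proof -
    define \<gamma> where "\<gamma> = (\<lambda>x. a *\<^sub>R \<alpha> x + b *\<^sub>R \<beta> x)"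
    have lg: "linear \<gamma>" unfolding \<gamma>_def
      by (intro linear_compose_add linear_compose_scale_right la lb)
    have adj: "adjoint \<gamma> = (\<lambda>y. a *\<^sub>R \<alpha>' y + b *\<^sub>R \<beta>' y)"
      by (rule adjoint_unique)
        (simp add: \<gamma>_def \<alpha>'_def \<beta>'_def inner_add_left inner_add_right
          adjoint_clauses[OF la] adjoint_clauses[OF lb])
    have "(adjoint \<gamma>) -` {0} = (range \<gamma>)\<^sup>\<bottom>"
      using ker_orthogonal_comp_adjoint[OF adjoint_linear[OF lg]] adjoint_adjoint[OF lg] by simp
    then have "(range \<gamma>)\<^sup>\<bottom> = ker \<alpha>' \<inter> ker \<beta>'"
      using U(3)[OF ab] by (simp add: adj ker_def vimage_def)
    then have "(range \<gamma>)\<^sup>\<bottom>\<^sup>\<bottom> = R\<^sup>\<bottom>\<^sup>\<bottom>" by (simp add: RO)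
    then show ?thesis
      using orthogonal_comp_self[OF subR] orthogonal_comp_self[OF linear_subspace_image[OF lg subspace_UNIV]]
      by (simp add: \<gamma>_def)
  qed
  then show ?thesis unfolding generic_comb_def R_def using U(1,2)
    by (intro exI[of _ U]) auto
qed


theorem lemma6p1:
  fixes \<alpha> \<beta> :: "'a::euclidean_space \<Rightarrow> 'b::euclidean_space"
  assumes "linear \<alpha>" and "linear \<beta>"
  shows "(\<beta> ` ker \<alpha> \<inter> range \<alpha> = {0} \<longrightarrow>
            generic_comb (\<lambda>a b. ker (\<lambda>x. a *\<^sub>R \<alpha> x + b *\<^sub>R \<beta> x) = ker \<alpha> \<inter> ker \<beta>))
       \<and> ((dual_map \<beta> ` dual_ker \<alpha> \<inter> dual_im \<alpha> = {\<lambda>_. 0}) \<longleftrightarrow>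
            {u + v | u v. u \<in> \<beta> -` range \<alpha> \<and> v \<in> ker \<alpha>} = UNIV)
       \<and> ((dual_map \<beta> ` dual_ker \<alpha> \<inter> dual_im \<alpha> = {\<lambda>_. 0} \<or>
            {u + v | u v. u \<in> \<beta> -` range \<alpha> \<and> v \<in> ker \<alpha>} = UNIV) \<longrightarrow>
            generic_comb (\<lambda>a b. range (\<lambda>x. a *\<^sub>R \<alpha> x + b *\<^sub>R \<beta> x) =
                                {u + v | u v. u \<in> range \<alpha> \<and> v \<in> range \<beta>}))"
  proof (intro conjI impI)
  assume "\<beta> ` ker \<alpha> \<inter> range \<alpha> = {0}"
  then show "generic_comb (\<lambda>a b. ker (\<lambda>x. a *\<^sub>R \<alpha> x + b *\<^sub>R \<beta> x) = ker \<alpha> \<inter> ker \<beta>)"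
    by (rule part1[OF assms])
next
  show "(dual_map \<beta> ` dual_ker \<alpha> \<inter> dual_im \<alpha> = {\<lambda>_. 0}) \<longleftrightarrow>
            {u + v | u v. u \<in> \<beta> -` range \<alpha> \<and> v \<in> ker \<alpha>} = UNIV"
    using sum_to_dual[OF assms] dual_to_sum[OF assms] by blast
next
  assume "dual_map \<beta> ` dual_ker \<alpha> \<inter> dual_im \<alpha> = {\<lambda>_. 0} \<or>
            {u + v | u v. u \<in> \<beta> -` range \<alpha> \<and> v \<in> ker \<alpha>} = UNIV"
  then have "{u + v | u v. u \<in> \<beta> -` range \<alpha> \<and> v \<in> ker \<alpha>} = UNIV"
    using dual_to_sum[OF assms] by blast
  then show "generic_comb (\<lambda>a b. range (\<lambda>x. a *\<^sub>R \<alpha> x + b *\<^sub>R \<beta> x) =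
                                {u + v | u v. u \<in> range \<alpha> \<and> v \<in> range \<beta>})"
    by (rule part3[OF assms])
qed

end
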